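(* In the twisted Yangian $Y^+(\mathfrak{gl}_{2n+1})$, with $\hat n=n+1$, for every $1\le k\le n$ one has, as an identity of formal series in $u^{-1},v^{-1}$ (rational coefficients expanded accordingly), $$s_{\hat n\hat n}(v)\,s_{k\hat n}(u)=f^-(v,u)\,f^+(v,\tilde u)\,s_{k\hat n}(u)\,s_{\hat n\hat n}(v)-\Big(\frac{p(v)}{u-v}\,s_{k\hat n}(v)+\frac{p(\tilde v)}{u-\tilde v}\,s_{k\hat n}(\tilde v)\Big)s_{\hat n\hat n}(u),$$ where $p(v):=1+\frac{1}{v-\tilde v}$.
   Context: Fix $n\ge1$, $N=2n+1$, $\hat n=n+1$ (orthogonal case, upper signs). Fix $\rho\in\mathbb C$ and write $\tilde u:=-u-\rho$, $\tilde v:=-v-\rho$. Let $f^\pm(u,v):=\frac{u-v\pm1}{u-v}$. For $k\in\mathbb N$ let $E^{(k)}_{ij}$ be matrix units of $\mathrm{End}(\mathbb C^k)$, $P^{(k,k)}=\sum_{i,j}E^{(k)}_{ij}\otimes E^{(k)}_{ji}$, $R^{(k,k)}(u)=I-u^{-1}P^{(k,k)}$. $Y^+(\mathfrak{gl}_{2n+1})$ is generated by $s_{ij}[r]$, $1\le i,j\le 2n+1$, $r\ge1$, with $s_{ij}(u)=\delta_{ij}+\sum_{r\ge1}s_{ij}[r]u^{-r}$. Let $\alpha(i)=i$ for $i\le n+1$ and $\alpha(i)=i-1$ for $i>n+1$, and $S(u):=\sum_{i,j=1}^{2n+2}E^{(2n+2)}_{ij}\otimes s_{\alpha(i)\alpha(j)}(u)$.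 Let $\hat\omega(E^{(2n+2)}_{ij})=E^{(2n+2)}_{\bar j\bar i}$ with $\bar i=2n+3-i$, $\hat S=\hat\omega(S)$, $\hat R=(\mathrm{id}\otimes\hat\omega)(R^{(2n+2,2n+2)})$. Defining relations: $R_{12}(u-v)S_1(u)\hat R_{12}(\tilde v-u)S_2(v)=S_2(v)\hat R_{12}(\tilde v-u)S_1(u)R_{12}(u-v)$ with $R=R^{(2n+2,2n+2)}$, and $\hat S(\tilde u)=S(u)+\frac{S(u)-S(\tilde u)}{u-\tilde u}$. *)

theory Defs
  imports Complex_Main "HOL-Computational_Algebra.Formal_Power_Series"
begin

(* A (unital, associative) complex algebra A is encoded as a ring_1 type 'a together
   with a unital ring homomorphism phi : complex -> 'a whose image is central. *)
definition calg_map :: "(complex \<Rightarrow> 'a::ring_1) \<Rightarrow> bool" where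
  "calg_map \<phi> \<longleftrightarrow> \<phi> 1 = 1 \<and> (\<forall>a b. \<phi> (a + b) = \<phi> a + \<phi> b)
     \<and> (\<forall>a b. \<phi> (a * b) = \<phi> a * \<phi> b) \<and> (\<forall>c x. \<phi> c * x = x * \<phi> c)"

(* One-variable series: s_ij(w) = delta_ij + sum_{r>=1} s_ij[r] w^{-r},
   encoded as a power series in z = w^{-1}. *)
definition ser :: "(nat \<Rightarrow> nat \<Rightarrow> nat \<Rightarrow> 'a::ring_1) \<Rightarrow> nat \<Rightarrow> nat \<Rightarrow> 'a fps" where
  "ser s i j = Abs_fps (\<lambda>r. if r = 0 then (if i = j then 1 else 0) else s i j r)"

(* (-w-rho)^{-1} expanded in z = w^{-1}:  -z/(1+rho z) = - sum_{m>=1} (-rho)^{m-1} z^m *)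
definition tilde_var :: "(complex \<Rightarrow> 'a::ring_1) \<Rightarrow> complex \<Rightarrow> 'a fps" where
  "tilde_var \<phi> \<rho> = Abs_fps (\<lambda>m. if m = 0 then 0 else - \<phi> ((-\<rho>) ^ (m - 1)))"

(* g(w) |-> g(-w-rho), re-expanded as a series in z = w^{-1} *)
definition tld :: "(complex \<Rightarrow> 'a::ring_1) \<Rightarrow> complex \<Rightarrow> 'a fps \<Rightarrow> 'a fps" where
  "tld \<phi> \<rho> g = fps_compose g (tilde_var \<phi> \<rho>)"

(* Two-variable series: 'a fps fps, outer variable x = u^{-1}, inner variable y = v^{-1}. *)
definition inU :: "'a::ring_1 fps \<Rightarrow> 'a fps fps" where
  "inU g = Abs_fps (\<lambda>r. fps_const (fps_nth g r))"

definition inV :: "'a::ring_1 fps \<Rightarrow> 'a fps fps" where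
  "inV g = fps_const g"

definition xU :: "'a::ring_1 fps fps" where "xU = fps_X"
definition yV :: "'a::ring_1 fps fps" where "yV = fps_const fps_X"

definition sc :: "(complex \<Rightarrow> 'a::ring_1) \<Rightarrow> complex \<Rightarrow> 'a fps fps" where
  "sc \<phi> c = fps_const (fps_const (\<phi> c))"

(* alpha : {1..2n+2} -> {1..2n+1}, and bar i = 2n+3-i *)
definition alpha :: "nat \<Rightarrow> nat \<Rightarrow> nat" where
  "alpha n i = (if i \<le> n + 1 then i else i - 1)"

definition bar :: "nat \<Rightarrow> nat \<Rightarrow> nat" where
  "bar n i = 2 * n + 3 - i"

(* Operators in End(C^{2n+2}) (x) End(C^{2n+2}) (x) (series): entries indexed by
   a = (i,k), b = (j,l), meaning the coefficient of E_ij (x) E_kl. *)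
definition idx :: "nat \<Rightarrow> (nat \<times> nat) set" where
  "idx n = {1..2*n+2} \<times> {1..2*n+2}"

type_synonym 'a op2 = "nat \<times> nat \<Rightarrow> nat \<times> nat \<Rightarrow> 'a fps fps"

definition mmul :: "nat \<Rightarrow> 'a::ring_1 op2 \<Rightarrow> 'a op2 \<Rightarrow> 'a op2" where
  "mmul n M M' a b = (\<Sum>c\<in>idx n. M a c * M' c b)"

definition Iop :: "'a::ring_1 op2" where
  "Iop a b = (if a = b then 1 else 0)"

definition Pop :: "'a::ring_1 op2" where
  "Pop a b = (if fst a = snd b \<and> snd a = fst b then 1 else 0)"

(* hat P = (id (x) hat omega)(P) = sum E_ij (x) E_{bar i, bar j} *)
definition Qop :: "nat \<Rightarrow> 'a::ring_1 op2" where
  "Qop n a b = (if snd a = bar n (fst a) \<and> snd b = bar n (fst b) then 1 else 0)"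

definition S1 :: "nat \<Rightarrow> (nat \<Rightarrow> nat \<Rightarrow> nat \<Rightarrow> 'a::ring_1) \<Rightarrow> 'a op2" where
  "S1 n s a b = (if snd a = snd b then inU (ser s (alpha n (fst a)) (alpha n (fst b))) else 0)"

definition S2 :: "nat \<Rightarrow> (nat \<Rightarrow> nat \<Rightarrow> nat \<Rightarrow> 'a::ring_1) \<Rightarrow> 'a op2" where
  "S2 n s a b = (if fst a = fst b then inV (ser s (alpha n (snd a)) (alpha n (snd b))) else 0)"

(* (u-v) R(u-v) * xy = (y - x) I - xy P *)
definition Rc :: "'a::ring_1 op2" where
  "Rc a b = (yV - xU) * Iop a b - xU * yV * Pop a b"

(* (tilde v - u) hatR(tilde v - u) * xy = -(x + y + rho x y) I - xy hatP *)
definition Rhc :: "nat \<Rightarrow> (complex \<Rightarrow> 'a::ring_1) \<Rightarrow> complex \<Rightarrow> 'a op2" where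
  "Rhc n \<phi> \<rho> a b = - (xU + yV + sc \<phi> \<rho> * xU * yV) * Iop a b - xU * yV * Qop n a b"

(* Reflection relation  R(u-v) S1(u) hatR(tilde v-u) S2(v) = S2(v) hatR(tilde v-u) S1(u) R(u-v),
   with both scalar denominators (u-v) and (tilde v - u) cleared (and multiplied by (xy)^2). *)
definition refl_rel :: "nat \<Rightarrow> (complex \<Rightarrow> 'a::ring_1) \<Rightarrow> complex \<Rightarrow> (nat \<Rightarrow> nat \<Rightarrow> nat \<Rightarrow> 'a) \<Rightarrow> bool" where
  "refl_rel n \<phi> \<rho> s \<longleftrightarrow> (\<forall>a\<in>idx n. \<forall>b\<in>idx n.
     mmul n (mmul n (mmul n Rc (S1 n s)) (Rhc n \<phi> \<rho>)) (S2 n s) a b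
   = mmul n (mmul n (mmul n (S2 n s) (Rhc n \<phi> \<rho>)) (S1 n s)) Rc a b)"

(* Symmetry relation  hatS(tilde u) = S(u) + (S(u) - S(tilde u))/(u - tilde u), entrywise,
   where hatS_{ab} = s_{alpha(bar b), alpha(bar a)}; multiplied by (u - tilde u) z = 2 + rho z. *)
definition symm_rel :: "nat \<Rightarrow> (complex \<Rightarrow> 'a::ring_1) \<Rightarrow> complex \<Rightarrow> (nat \<Rightarrow> nat \<Rightarrow> nat \<Rightarrow> 'a) \<Rightarrow> bool" where
  "symm_rel n \<phi> \<rho> s \<longleftrightarrow> (\<forall>a\<in>{1..2*n+2}. \<forall>b\<in>{1..2*n+2}.
     (2 + fps_const (\<phi> \<rho>) * fps_X) * tld \<phi> \<rho> (ser s (alpha n (bar n b)) (alpha n (bar n a)))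
   = (2 + fps_const (\<phi> \<rho>) * fps_X) * ser s (alpha n a) (alpha n b)
     + fps_X * (ser s (alpha n a) (alpha n b) - tld \<phi> \<rho> (ser s (alpha n a) (alpha n b))))"

(* s : generators s_ij[r] (1 <= i,j <= 2n+1, r >= 1) of a complex algebra satisfying the
   defining relations of Y^+(gl_{2n+1}) *)
definition twisted_yangian_gens ::
  "nat \<Rightarrow> (complex \<Rightarrow> 'a::ring_1) \<Rightarrow> complex \<Rightarrow> (nat \<Rightarrow> nat \<Rightarrow> nat \<Rightarrow> 'a) \<Rightarrow> bool" where
  "twisted_yangian_gens n \<phi> \<rho> s \<longleftrightarrow> calg_map \<phi> \<and> refl_rel n \<phi> \<rho> s \<and> symm_rel n \<phi> \<rho> s"

end

theory Submission
  imports Defs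
begin


definition chom :: "('b::ring_1 \<Rightarrow> 'c::ring_1) \<Rightarrow> bool" where
  "chom h \<longleftrightarrow> h 1 = 1 \<and> (\<forall>a b. h (a + b) = h a + h b)
     \<and> (\<forall>a b. h (a * b) = h a * h b) \<and> (\<forall>c x. h c * x = x * h c)"

lemma chomD:
  assumes "chom h"
  shows "h 1 = 1" "h (a + b) = h a + h b" "h (a * b) = h a * h b" "h c * x = x * h c"
  using assms unfolding chom_def by blast+

lemma chom_0: "chom h \<Longrightarrow> h 0 = 0"
  using chomD(2)[of h 0 0] by simp

lemma chom_neg: "chom h \<Longrightarrow> h (- a) = - h a"
  using chomD(2)[of h a "-a"] chom_0[of h] by (metis add.commute neg_eq_iff_add_eq_0)

lemma chom_diff: "chom h \<Longrightarrow> h (a - b) = h a - h b"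
  using chomD(2)[of h a "-b"] chom_neg[of h b] by simp

lemma chom_sum: "chom h \<Longrightarrow> h (sum g A) = (\<Sum>x\<in>A. h (g x))"
  using sum_comp_morphism[of h g A] chom_0[of h] chomD(2)[of h] by (simp add: o_def)

lemma chom_of_nat: "chom h \<Longrightarrow> h (of_nat m) = of_nat m"
  by (induction m) (simp_all add: chom_0 chomD(1,2))

lemma chom_numeral: "chom h \<Longrightarrow> h (numeral w) = numeral w"
  using chom_of_nat[of h "numeral w"] by simp

definition fmap :: "('b::ring_1 \<Rightarrow> 'c::ring_1) \<Rightarrow> 'b fps \<Rightarrow> 'c fps" where
  "fmap h K = Abs_fps (\<lambda>i. h (fps_nth K i))"

lemma fmap_nth[simp]: "fps_nth (fmap h K) i = h (fps_nth K i)"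
  by (simp add: fmap_def)

lemma chom_fmap:
  fixes h :: "'b::ring_1 \<Rightarrow> 'c::ring_1"
  assumes h: "chom h"
  shows "chom (fmap h)"
  unfolding chom_def
proof (intro conjI allI)
  show "fmap h 1 = 1"
    by (rule fps_ext) (simp add: chom_0[OF h] chomD(1)[OF h] fps_one_nth)
  fix a b
  show "fmap h (a + b) = fmap h a + fmap h b"
    by (rule fps_ext) (simp add: chomD(2)[OF h])
  show "fmap h (a * b) = fmap h a * fmap h b"
    by (rule fps_ext) (simp add: fps_mult_nth chom_sum[OF h] chomD(3)[OF h])
next
  fix c :: "'b fps" and x :: "'c fps"
  show "fmap h c * x = x * fmap h c"
  proof (rule fps_ext)
    fix n
    have "fps_nth (fmap h c * x) n = (\<Sum>i=0..n. fps_nth x (n - i) * h (fps_nth c i))"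
      by (simp add: fps_mult_nth chomD(4)[OF h])
    also have "\<dots> = (\<Sum>i=0..n. fps_nth x i * h (fps_nth c (n - i)))"
    proof -
      have "(\<Sum>i=0..n. fps_nth x i * h (fps_nth c (n - i)))
          = (\<Sum>i=0..n. fps_nth x (n + 0 - i) * h (fps_nth c (n - (n + 0 - i))))"
        by (rule sum.atLeastAtMost_rev)
      also have "\<dots> = (\<Sum>i=0..n. fps_nth x (n - i) * h (fps_nth c i))"
        by (rule sum.cong) auto
      finally show ?thesis by simp
    qed
    also have "\<dots> = fps_nth (x * fmap h c) n" by (simp add: fps_mult_nth)
    finally show "fps_nth (fmap h c * x) n = fps_nth (x * fmap h c) n" .
  qed
qed




lemma fpsX_cancel: "fps_X * (g::'a::ring_1 fps) = 0 \<Longrightarrow> g = 0"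
proof (rule fps_ext)
  fix j assume "fps_X * g = 0"
  then have "fps_nth (fps_X * g) (Suc j) = 0" by simp
  then show "fps_nth g j = fps_nth 0 j" by simp
qed

lemma cancel1:
  fixes F :: "'a::ring_1 fps fps"
  assumes "(yV - xU - xU * yV) * F = 0"
  shows "F = 0"
proof -
  have nth: "fps_nth ((yV - xU - xU * yV) * F) i =
     fps_X * fps_nth F i - (if i = 0 then 0 else fps_nth F (i - 1) + fps_X * fps_nth F (i - 1))" for i
    by (simp add: yV_def xU_def algebra_simps mult.assoc del: fps_X_mult_nth)
       (simp add: fps_X_mult_nth)
  have "fps_nth F i = 0" for i
  proof (induction i)
    case 0
    from nth[of 0] assms have "fps_X * fps_nth F 0 = 0" by simp
    then show ?case by (rule fpsX_cancel)
  next
    case (Suc i)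
    from nth[of "Suc i"] assms Suc have "fps_X * fps_nth F (Suc i) = 0" by simp
    then show ?case by (rule fpsX_cancel)
  qed
  then show ?thesis by (intro fps_ext) simp
qed

lemma cancel2a:
  fixes f :: "'a::ring_1 fps" and t :: 'a
  assumes t: "t * 2 = 1" and "(2 + fps_const d * fps_X) * f = 0"
  shows "f = 0"
proof -
  have nth: "fps_nth ((2 + fps_const d * fps_X) * f) i =
      2 * fps_nth f i + (if i = 0 then 0 else d * fps_nth f (i - 1))" for i
    by (simp add: distrib_right mult.assoc mult_2)
  have z: "2 * a = 0 \<Longrightarrow> a = 0" for a :: 'a
  proof -
    assume a: "2 * a = 0"
    have "a = (t * 2) * a" using t by simp
    also have "\<dots> = t * (2 * a)" by (rule mult.assoc)
    finally show "a = 0" using a by simp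
  qed
  have e: "fps_nth ((2 + fps_const d * fps_X) * f) i = 0" for i
    using assms(2) by simp
  have "fps_nth f i = 0" for i
  proof (induction i)
    case 0
    have "2 * fps_nth f 0 = 0" using nth[of 0] e[of 0] by simp
    then show ?case by (rule z)
  next
    case (Suc i)
    have "2 * fps_nth f (Suc i) = 0" using nth[of "Suc i"] e[of "Suc i"] Suc by simp
    then show ?case by (rule z)
  qed
  then show ?thesis by (intro fps_ext) simp
qed

lemma cancel2:
  fixes F :: "'a::ring_1 fps fps" and t :: 'a
  assumes t: "t * 2 = 1" and "fps_const (2 + fps_const d * fps_X) * F = 0"
  shows "F = 0"
proof (rule fps_ext)
  fix i
  have "fps_nth (fps_const (2 + fps_const d * fps_X) * F) i = 0" using assms by simp
  then have "(2 + fps_const d * fps_X) * fps_nth F i = 0" by simp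
  then show "fps_nth F i = fps_nth 0 i" using cancel2a[OF t] by simp
qed




definition lin :: "('b \<Rightarrow> 'c::ring_1) \<Rightarrow> (nat \<Rightarrow> 'c) \<Rightarrow> nat \<Rightarrow> (nat \<Rightarrow> 'b) \<Rightarrow> 'c" where
  "lin h P N k = (\<Sum>i<N. h (k i) * P i)"

lemma lin_add: "chom h \<Longrightarrow> lin h P N k + lin h P N m = lin h P N (\<lambda>i. k i + m i)"
  by (simp add: lin_def chomD(2) distrib_right sum.distrib)

lemma lin_diff: "chom h \<Longrightarrow> lin h P N k - lin h P N m = lin h P N (\<lambda>i. k i - m i)"
  by (simp add: lin_def chom_diff left_diff_distrib sum_subtractf)

lemma lin_smult: "chom h \<Longrightarrow> h a * lin h P N k = lin h P N (\<lambda>i. a * k i)"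
  by (simp add: lin_def chomD(3) sum_distrib_left mult.assoc)

lemma lin_rmult: "lin h P N k * Q = lin h (\<lambda>i. P i * Q) N k"
  by (simp add: lin_def sum_distrib_right mult.assoc)

lemma lin_atom: "chom h \<Longrightarrow> j < N \<Longrightarrow> h K * P j = lin h P N (\<lambda>i. if i = j then K else 0)"
  unfolding lin_def
  by (subst sum.remove[of _ j]) (auto simp: chom_0 intro!: sum.neutral)

lemma lin_cong: "(\<And>i. i < N \<Longrightarrow> k i = m i) \<Longrightarrow> lin h P N k = lin h P N m"
  by (simp add: lin_def)

lemma lin_zero: "chom h \<Longrightarrow> lin h P N (\<lambda>i. 0) = 0"
  by (simp add: lin_def chom_0)

lemma calg_chom: "calg_map \<phi> \<Longrightarrow> chom \<phi>"
  unfolding calg_map_def chom_def by blast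

abbreviation iota :: "(complex \<Rightarrow> 'a::ring_1) \<Rightarrow> complex fps fps \<Rightarrow> 'a fps fps" where
  "iota \<phi> \<equiv> fmap (fmap \<phi>)"

lemma chom_iota: "calg_map \<phi> \<Longrightarrow> chom (iota \<phi>)"
  by (intro chom_fmap calg_chom)

lemma fmap_const: "chom h \<Longrightarrow> fmap h (fps_const c) = fps_const (h c)"
  by (rule fps_ext) (simp add: chom_0)

lemma fmap_X: "chom h \<Longrightarrow> fmap h fps_X = fps_X"
  by (rule fps_ext) (simp add: chom_0 chomD(1) fps_X_def)

lemma iota_atoms:
  fixes \<phi> :: "complex \<Rightarrow> 'a::ring_1"
  assumes "calg_map \<phi>"
  shows "xU = iota \<phi> fps_X" "yV = iota \<phi> (fps_const fps_X)"
        "sc \<phi> c = iota \<phi> (fps_const (fps_const c))"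
  using assms
  by (simp_all add: xU_def yV_def sc_def fmap_const fmap_X calg_chom chom_fmap)

lemma iota_fold:
  fixes \<phi> :: "complex \<Rightarrow> 'a::ring_1"
  assumes "calg_map \<phi>"
  shows "iota \<phi> a * iota \<phi> b = iota \<phi> (a * b)"
    "iota \<phi> a + iota \<phi> b = iota \<phi> (a + b)"
    "iota \<phi> a - iota \<phi> b = iota \<phi> (a - b)"
    "- iota \<phi> a = iota \<phi> (- a)"
    "iota \<phi> a * (iota \<phi> b * r) = iota \<phi> (a * b) * r"
    "(numeral w :: 'a fps fps) = iota \<phi> (numeral w)"
    "(1 :: 'a fps fps) = iota \<phi> 1"
    "r * iota \<phi> a = iota \<phi> a * r"
proof -
  have h: "chom (iota \<phi>)" by (rule chom_iota[OF assms])
  show "iota \<phi> a * iota \<phi> b = iota \<phi> (a * b)" by (rule chomD(3)[OF h, symmetric])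
  show "iota \<phi> a + iota \<phi> b = iota \<phi> (a + b)" by (rule chomD(2)[OF h, symmetric])
  show "iota \<phi> a - iota \<phi> b = iota \<phi> (a - b)" by (rule chom_diff[OF h, symmetric])
  show "- iota \<phi> a = iota \<phi> (- a)" by (rule chom_neg[OF h, symmetric])
  show "iota \<phi> a * (iota \<phi> b * r) = iota \<phi> (a * b) * r"
    by (subst mult.assoc[symmetric]) (rule arg_cong[where f="\<lambda>z. z * r"], rule chomD(3)[OF h, symmetric])
  show "(numeral w :: 'a fps fps) = iota \<phi> (numeral w)" by (rule chom_numeral[OF h, symmetric])
  show "(1 :: 'a fps fps) = iota \<phi> 1" by (rule chomD(1)[OF h, symmetric])
  show "r * iota \<phi> a = iota \<phi> a * r" by (rule chomD(4)[OF h, symmetric])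
qed




definition RR :: "nat \<Rightarrow> nat set" where "RR n = {1..2*n+2}"

lemma RR_fin[simp]: "finite (RR n)" by (simp add: RR_def)

lemma idx_RR: "idx n = RR n \<times> RR n" by (simp add: idx_def RR_def)

lemma sum_idx: "(\<Sum>c\<in>idx n. f c) = (\<Sum>p\<in>RR n. \<Sum>q\<in>RR n. f (p, q))"
  unfolding idx_RR by (simp add: sum.cartesian_product)

lemma ifz1: "x * (if P then a else 0) = (if P then x * a else (0::'a::ring_1))" by simp
lemma ifz2: "(if P then a else 0) * x = (if P then a * x else (0::'a::ring_1))" by simp

lemma Iop_pt: "Iop a c = (if c = a then (1::'a::ring_1 fps fps) else 0)"
  by (simp add: Iop_def)
lemma Pop_pt: "Pop (i,k) c = (if c = (k,i) then (1::'a::ring_1 fps fps) else 0)"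
  by (cases c) (simp add: Pop_def)
lemma Pop_pt2: "Pop c (j,l) = (if c = (l,j) then (1::'a::ring_1 fps fps) else 0)"
  by (cases c) (auto simp add: Pop_def)
lemma Iop_pt2: "Iop c (j,l) = (if c = (j,l) then (1::'a::ring_1 fps fps) else 0)"
  by (auto simp add: Iop_def)
lemma ite_lin: "(A * (if P then 1 else 0) - C * (if Q then 1 else 0)) = (if P then A else 0) - (if Q then C else (0::'a::ring_1))"
  by simp

lemma Rc_pt: "Rc (i,k) c = (if c = (i,k) then yV - xU else 0) - (if c = (k,i) then xU * yV else (0::'a::ring_1 fps fps))"
  unfolding Rc_def Iop_pt Pop_pt by (rule ite_lin)

lemma Rc_pt2: "Rc c (j,l) = (if c = (j,l) then yV - xU else 0) - (if c = (l,j) then xU * yV else (0::'a::ring_1 fps fps))"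
  unfolding Rc_def Iop_pt2 Pop_pt2 by (rule ite_lin)

lemma Rhc_pt2: "Rhc n \<phi> \<rho> c (j,l) = (if c = (j,l) then - (xU + yV + sc \<phi> \<rho> * xU * yV) else 0)
          - (if snd c = bar n (fst c) \<and> l = bar n j then xU * yV else (0::'a::ring_1 fps fps))"
  unfolding Rhc_def Iop_pt2 Qop_def snd_conv fst_conv by (rule ite_lin)

lemma RcL:
  assumes "i \<in> RR n" "k \<in> RR n"
  shows "mmul n Rc M (i,k) b = (yV - xU) * M (i,k) b - xU * yV * M (k,i) b"
  unfolding mmul_def Rc_pt left_diff_distrib ifz2 sum_subtractf
  using assms by (simp add: idx_RR)

lemma RcR:
  assumes "j \<in> RR n" "l \<in> RR n"
  shows "mmul n M Rc a (j,l) = M a (j,l) * (yV - xU) - M a (l,j) * (xU * yV)"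
  unfolding mmul_def Rc_pt2 right_diff_distrib ifz1 sum_subtractf
  using assms by (simp add: idx_RR)

lemma S1R:
  assumes "l \<in> RR n"
  shows "mmul n M (S1 n s) a (j,l) = (\<Sum>p\<in>RR n. M a (p,l) * inU (ser s (alpha n p) (alpha n j)))"
  unfolding mmul_def sum_idx
  by (rule sum.cong) (use assms in \<open>simp_all add: S1_def ifz1\<close>)

lemma S2R:
  assumes "j \<in> RR n"
  shows "mmul n M (S2 n s) a (j,l) = (\<Sum>q\<in>RR n. M a (j,q) * inV (ser s (alpha n q) (alpha n l)))"
  unfolding mmul_def sum_idx
  using assms by (simp add: S2_def ifz1 sum.swap[of _ "RR n"])

lemma bar_in: "p \<in> RR n \<Longrightarrow> bar n p \<in> RR n"
  by (auto simp: bar_def RR_def)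

lemma RhcR:
  assumes "j \<in> RR n" "l \<in> RR n"
  shows "mmul n M (Rhc n \<phi> \<rho>) a (j,l) = M a (j,l) * (- (xU + yV + sc \<phi> \<rho> * xU * yV))
     - (if l = bar n j then (\<Sum>p\<in>RR n. M a (p, bar n p)) else 0) * (xU * yV)"
proof -
  have "(\<Sum>c\<in>idx n. if snd c = bar n (fst c) \<and> l = bar n j then M a c * (xU * yV) else 0)
      = (if l = bar n j then (\<Sum>p\<in>RR n. M a (p, bar n p)) else 0) * (xU * yV)"
    unfolding sum_idx using bar_in by (simp add: sum_distrib_right)
  then show ?thesis
    unfolding mmul_def Rhc_pt2 right_diff_distrib ifz1 sum_subtractf using assms by (simp add: idx_RR)
qed




lemma bar_eq: "p \<in> RR n \<Longrightarrow> k \<in> RR n \<Longrightarrow> (k = bar n p) = (p = bar n k)"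
  by (auto simp: bar_def RR_def)

lemma sum_bar_delta:
  assumes "k \<in> RR n"
  shows "(\<Sum>p\<in>RR n. if k = bar n p then f p else 0) = f (bar n k)"
proof -
  have "(\<Sum>p\<in>RR n. if k = bar n p then f p else 0) = (\<Sum>p\<in>RR n. if p = bar n k then f p else 0)"
    by (rule sum.cong) (use assms bar_eq in auto)
  also have "\<dots> = f (bar n k)" using bar_in[OF assms] by simp
  finally show ?thesis .
qed

lemma LHSentry:
  assumes "i \<in> RR n" "k \<in> RR n" "j \<in> RR n" "l \<in> RR n"
  shows "mmul n (mmul n (mmul n Rc (S1 n s)) (Rhc n \<phi> \<rho>)) (S2 n s) (i,k) (j,l)
   = (yV - xU) * inU (ser s (alpha n i) (alpha n j)) * (- (xU + yV + sc \<phi> \<rho> * xU * yV)) * inV (ser s (alpha n k) (alpha n l))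
   - xU * yV * inU (ser s (alpha n k) (alpha n j)) * (- (xU + yV + sc \<phi> \<rho> * xU * yV)) * inV (ser s (alpha n i) (alpha n l))
   - ((yV - xU) * inU (ser s (alpha n i) (alpha n (bar n k))) - xU * yV * inU (ser s (alpha n k) (alpha n (bar n i))))
       * (xU * yV) * inV (ser s (alpha n (bar n j)) (alpha n l))"
proof -
  let ?N = "mmul n Rc (S1 n s)"
  have N: "?N (i,k) (p,q) = (if k = q then (yV - xU) * inU (ser s (alpha n i) (alpha n p)) else 0)
        - (if i = q then xU * yV * inU (ser s (alpha n k) (alpha n p)) else 0)" for p q
    using assms by (simp add: RcL S1_def)
  have Nsum: "(\<Sum>p\<in>RR n. ?N (i,k) (p, bar n p)) = (yV - xU) * inU (ser s (alpha n i) (alpha n (bar n k)))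
       - xU * yV * inU (ser s (alpha n k) (alpha n (bar n i)))"
    using assms by (simp only: N sum_subtractf sum_bar_delta)
  have "mmul n (mmul n ?N (Rhc n \<phi> \<rho>)) (S2 n s) (i,k) (j,l)
     = (\<Sum>q\<in>RR n. (?N (i,k) (j,q) * (- (xU + yV + sc \<phi> \<rho> * xU * yV))
     - (if q = bar n j then (\<Sum>p\<in>RR n. ?N (i,k) (p, bar n p)) else 0) * (xU * yV)) * inV (ser s (alpha n q) (alpha n l)))"
    using assms by (simp add: S2R RhcR)
  also have "\<dots> = (yV - xU) * inU (ser s (alpha n i) (alpha n j)) * (- (xU + yV + sc \<phi> \<rho> * xU * yV)) * inV (ser s (alpha n k) (alpha n l))
   - xU * yV * inU (ser s (alpha n k) (alpha n j)) * (- (xU + yV + sc \<phi> \<rho> * xU * yV)) * inV (ser s (alpha n i) (alpha n l))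
   - ((yV - xU) * inU (ser s (alpha n i) (alpha n (bar n k))) - xU * yV * inU (ser s (alpha n k) (alpha n (bar n i))))
       * (xU * yV) * inV (ser s (alpha n (bar n j)) (alpha n l))"
    unfolding Nsum unfolding N
    using assms bar_in[of j n]
    by (simp add: left_diff_distrib ifz2 sum_subtractf sum_bar_delta del: mult_minus_right mult_minus_left minus_add_distrib)
  finally show ?thesis .
qed

lemma Mform:
  assumes "i \<in> RR n" "k \<in> RR n" "j \<in> RR n" "l \<in> RR n"
  shows "mmul n (mmul n (S2 n s) (Rhc n \<phi> \<rho>)) (S1 n s) (i,k) (j,l)
    = inV (ser s (alpha n k) (alpha n l)) * (- (xU + yV + sc \<phi> \<rho> * xU * yV)) * inU (ser s (alpha n i) (alpha n j))
    - inV (ser s (alpha n k) (alpha n (bar n i))) * (xU * yV) * inU (ser s (alpha n (bar n l)) (alpha n j))"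
proof -
  have Ssum: "(\<Sum>r\<in>RR n. S2 n s (i,k) (r, bar n r)) = inV (ser s (alpha n k) (alpha n (bar n i)))"
    using assms by (simp add: S2_def)
  have "mmul n (mmul n (S2 n s) (Rhc n \<phi> \<rho>)) (S1 n s) (i,k) (j,l)
     = (\<Sum>p\<in>RR n. (S2 n s (i,k) (p,l) * (- (xU + yV + sc \<phi> \<rho> * xU * yV))
         - (if l = bar n p then (\<Sum>r\<in>RR n. S2 n s (i,k) (r, bar n r)) else 0) * (xU * yV))
         * inU (ser s (alpha n p) (alpha n j)))"
    using assms by (simp add: S1R RhcR)
  also have "\<dots> = inV (ser s (alpha n k) (alpha n l)) * (- (xU + yV + sc \<phi> \<rho> * xU * yV)) * inU (ser s (alpha n i) (alpha n j))
    - inV (ser s (alpha n k) (alpha n (bar n i))) * (xU * yV) * inU (ser s (alpha n (bar n l)) (alpha n j))"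
    unfolding Ssum
    using assms bar_in[of l n]
    by (simp add: S2_def left_diff_distrib ifz2 sum_subtractf sum_bar_delta del: mult_minus_right mult_minus_left minus_add_distrib)
  finally show ?thesis .
qed

lemma RHSentry:
  assumes "i \<in> RR n" "k \<in> RR n" "j \<in> RR n" "l \<in> RR n"
  shows "mmul n (mmul n (mmul n (S2 n s) (Rhc n \<phi> \<rho>)) (S1 n s)) Rc (i,k) (j,l)
    = (inV (ser s (alpha n k) (alpha n l)) * (- (xU + yV + sc \<phi> \<rho> * xU * yV)) * inU (ser s (alpha n i) (alpha n j))
    - inV (ser s (alpha n k) (alpha n (bar n i))) * (xU * yV) * inU (ser s (alpha n (bar n l)) (alpha n j))) * (yV - xU)
    - (inV (ser s (alpha n k) (alpha n j)) * (- (xU + yV + sc \<phi> \<rho> * xU * yV)) * inU (ser s (alpha n i) (alpha n l))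
    - inV (ser s (alpha n k) (alpha n (bar n i))) * (xU * yV) * inU (ser s (alpha n (bar n j)) (alpha n l))) * (xU * yV)"
  using assms by (simp add: RcR Mform)





lemma lin_neg: "chom h \<Longrightarrow> - lin h P N k = lin h P N (\<lambda>i. - k i)"
  by (simp add: lin_def chom_neg sum_negf)

lemma comm_rules:
  fixes \<phi> :: "complex \<Rightarrow> 'a::ring_1"
  assumes "calg_map \<phi>"
  shows "inU g * iota \<phi> a = iota \<phi> a * inU g"
        "inV g * iota \<phi> a = iota \<phi> a * inV g"
        "inU g * (iota \<phi> a * r) = iota \<phi> a * (inU g * r)"
        "inV g * (iota \<phi> a * r) = iota \<phi> a * (inV g * r)"
  by (simp_all add: iota_fold(8)[OF assms] mult.assoc[symmetric])

lemma lin_rsc: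
  assumes h: "chom h"
  shows "lin h P N k * h a = lin h P N (\<lambda>i. a * k i)"
proof -
  have e: "h (k x) * P x * h a = h (a * k x) * P x" for x
  proof -
    have "h (k x) * P x * h a = h (k x) * (h a * P x)" by (simp only: mult.assoc chomD(4)[OF h, of a "P x"])
    also have "\<dots> = (h (k x) * h a) * P x" by (simp only: mult.assoc)
    also have "h (k x) * h a = h a * h (k x)" by (rule chomD(4)[OF h])
    finally show ?thesis by (simp only: chomD(3)[OF h])
  qed
  show ?thesis unfolding lin_def sum_distrib_right e ..
qed

lemma lin_eq0: "lin h P N k = 0 \<Longrightarrow> (\<And>i. i < N \<Longrightarrow> m i = k i) \<Longrightarrow> lin h P N m = 0"
  by (metis lin_cong)

lemma lt7: "(i::nat) < 7 \<Longrightarrow> i = 0 \<or> i = 1 \<or> i = 2 \<or> i = 3 \<or> i = 4 \<or> i = 5 \<or> i = 6"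
  by auto

lemmas push = fps_const_add[symmetric] fps_const_neg[symmetric] fps_const_sub[symmetric] fps_const_mult[symmetric]

lemma lt8: "(i::nat) < 8 \<Longrightarrow> i = 0 \<or> i = 1 \<or> i = 2 \<or> i = 3 \<or> i = 4 \<or> i = 5 \<or> i = 6 \<or> i = 7"
  by auto

lemma inV_hom:
  "inV (a * b) = inV a * inV (b::'a::ring_1 fps)"
  "inV (a + b) = inV a + inV b"
  "inV (a - b) = inV a - inV b"
  "inV (2::'a fps) = 2"
  "inV (fps_const (\<phi> c)) = sc \<phi> c"
  "inV (fps_X::'a fps) = yV"
  by (simp_all add: inV_def sc_def yV_def fps_numeral_fps_const)

lemma bar_bar: "k \<le> 2*n+3 \<Longrightarrow> bar n (bar n k) = k"
  by (simp add: bar_def)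

theorem mainTheorem2:
  fixes n k :: nat and \<rho> :: complex and \<phi> :: "complex \<Rightarrow> 'a::ring_1"
    and s :: "nat \<Rightarrow> nat \<Rightarrow> nat \<Rightarrow> 'a"
  assumes "n \<ge> 1"
    and "twisted_yangian_gens n \<phi> \<rho> s"
    and "1 \<le> k" and "k \<le> n"
  shows "(yV - xU) * (xU + yV + sc \<phi> \<rho> * xU * yV) * (2 + sc \<phi> \<rho> * yV)
           * inV (ser s (n+1) (n+1)) * inU (ser s k (n+1))
       = (yV - xU + xU * yV) * (xU + yV + sc \<phi> (\<rho> + 1) * xU * yV) * (2 + sc \<phi> \<rho> * yV)
           * inU (ser s k (n+1)) * inV (ser s (n+1) (n+1))
         - xU * yV * ( (2 + sc \<phi> (\<rho> + 1) * yV) * (xU + yV + sc \<phi> \<rho> * xU * yV)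
                         * inV (ser s k (n+1))
                     + (2 + sc \<phi> (\<rho> - 1) * yV) * (yV - xU)
                         * inV (tld \<phi> \<rho> (ser s k (n+1))) )
           * inU (ser s (n+1) (n+1))"
proof -
  have cm: "calg_map \<phi>" and rr: "refl_rel n \<phi> \<rho> s" and sy: "symm_rel n \<phi> \<rho> s"
    using assms(2) by (auto simp: twisted_yangian_gens_def)
  have ch: "chom (iota \<phi>)" by (rule chom_iota[OF cm])
  define kk where "kk = 2*n+2-k"
  have inR: "k \<in> RR n" "n+1 \<in> RR n" "n+2 \<in> RR n" "bar n k \<in> RR n"
    using assms by (auto simp: RR_def bar_def)
  have al: "alpha n k = k" "alpha n (n+1) = n+1" "alpha n (n+2) = n+1"
     "bar n (n+1) = n+2" "bar n (n+2) = n+1" "alpha n (bar n k) = kk" "bar n (bar n k) = k"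
    using assms by (auto simp: alpha_def bar_def kk_def)
  define skh where "skh = ser s k (n+1)"
  define shh where "shh = ser s (n+1) (n+1)"
  define shk where "shk = ser s (n+1) kk"
  define tsk where "tsk = tld \<phi> \<rho> skh"
  define tshk where "tshk = tld \<phi> \<rho> shk"
  define P where "P = (\<lambda>i::nat. [inU skh * inV shh, inV shh * inU skh, inV skh * inU shh,
        inV shk * inU shh, inV tsk * inU shh, inU shh * inV skh, inU shk * inV shh, inV tshk * inU shh] ! i)"
  have Pf: "inU skh * inV shh = P 0" "inV shh * inU skh = P 1" "inV skh * inU shh = P 2"
     "inV shk * inU shh = P 3" "inV tsk * inU shh = P 4" "inU shh * inV skh = P 5" "inU shk * inV shh = P 6"
     "inV tshk * inU shh = P 7"
    by (simp_all add: P_def)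
  note la = lin_atom[OF ch, where N=8 and P=P]
  note nsimps = iota_atoms[OF cm] iota_fold(1-7)[OF cm] comm_rules[OF cm] mult.assoc
     left_diff_distrib right_diff_distrib distrib_left distrib_right Pf la
     lin_add[OF ch] lin_diff[OF ch] lin_neg[OF ch] lin_rsc[OF ch]
  define X :: "complex fps fps" where "X = fps_X"
  define Y :: "complex fps fps" where "Y = fps_const fps_X"
  define r :: "complex fps fps" where "r = fps_const (fps_const \<rho>)"
  define A where "A = Y - X"
  define B where "B = - (X + Y + r * X * Y)"
  define c where "c = X * Y"
  note cdefs = push A_def B_def c_def X_def Y_def r_def
  note cdel = fps_const_add fps_const_neg fps_const_sub fps_const_mult
  define kR1 where "kR1 = (\<lambda>i::nat. if i = 0 then A*B - A*c else if i = 5 then - B*c else if i = 6 then c*c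
       else if i = 1 then -(A*B - B*c) else if i = 3 then -(c*c - A*c) else 0)"
  define kR3 where "kR3 = (\<lambda>i::nat. if i = 5 then A*B else if i = 6 then - A*c else if i = 0 then c*c - B*c
       else if i = 2 then -((A-c)*(B-c)) else 0)"
  define kS1 where "kS1 = (\<lambda>i::nat. if i = 7 then 2+r*Y else if i = 2 then -(2+r*Y) - Y else if i = 4 then Y else 0)"
  define kS2 where "kS2 = (\<lambda>i::nat. if i = 4 then 2+r*Y else if i = 3 then -(2+r*Y) - Y else if i = 7 then Y else 0)"
  define sg where "sg = (\<lambda>i::nat. if i = 3 then 2+r*Y else if i = 2 then -Y else if i = 4 then -(2+(r-1)*Y) else 0)"
  define e where "e = (\<lambda>i::nat. if i = 0 then (B-c)*(A+c) else if i = 1 then -(A*B) else if i = 3 then A*c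
       else if i = 2 then -(c*(B-c)) else 0)"
  have R1raw: "mmul n (mmul n (mmul n Rc (S1 n s)) (Rhc n \<phi> \<rho>)) (S2 n s) (k,n+1) (n+1,n+1)
     = mmul n (mmul n (mmul n (S2 n s) (Rhc n \<phi> \<rho>)) (S1 n s)) Rc (k,n+1) (n+1,n+1)"
    using rr inR unfolding refl_rel_def idx_RR by blast
  have R1: "lin (iota \<phi>) P 8 kR1 = 0"
    using R1raw unfolding LHSentry[OF inR(1,2,2,2)] RHSentry[OF inR(1,2,2,2)]
    apply (simp only: al skh_def[symmetric] shh_def[symmetric] shk_def[symmetric])
    apply (subst (asm) eq_iff_diff_eq_0)
    apply (simp add: nsimps)
    apply (erule lin_eq0)
    apply (drule lt8)
    apply (elim disjE)
    apply (simp_all add: cdefs kR1_def del: cdel mult_cancel_left mult_cancel_right)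
    apply ((rule disjI2 | algebra)+)?
    done
  have R3raw: "mmul n (mmul n (mmul n Rc (S1 n s)) (Rhc n \<phi> \<rho>)) (S2 n s) (n+1,k) (n+1,n+1)
     = mmul n (mmul n (mmul n (S2 n s) (Rhc n \<phi> \<rho>)) (S1 n s)) Rc (n+1,k) (n+1,n+1)"
    using rr inR unfolding refl_rel_def idx_RR by blast
  have R3: "lin (iota \<phi>) P 8 kR3 = 0"
    using R3raw unfolding LHSentry[OF inR(2,1,2,2)] RHSentry[OF inR(2,1,2,2)]
    apply (simp only: al skh_def[symmetric] shh_def[symmetric] shk_def[symmetric])
    apply (subst (asm) eq_iff_diff_eq_0)
    apply (simp add: nsimps)
    apply (erule lin_eq0)
    apply (drule lt8)
    apply (elim disjE)
    apply (simp_all add: cdefs kR3_def del: cdel mult_cancel_left mult_cancel_right)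
    apply ((rule disjI2 | algebra)+)?
    done
  have syA: "\<And>a b. a \<in> RR n \<Longrightarrow> b \<in> RR n \<Longrightarrow>
     (2 + fps_const (\<phi> \<rho>) * fps_X) * tld \<phi> \<rho> (ser s (alpha n (bar n b)) (alpha n (bar n a)))
   = (2 + fps_const (\<phi> \<rho>) * fps_X) * ser s (alpha n a) (alpha n b)
     + fps_X * (ser s (alpha n a) (alpha n b) - tld \<phi> \<rho> (ser s (alpha n a) (alpha n b)))"
    using sy unfolding symm_rel_def RR_def by blast
  have S1raw: "(2 + fps_const (\<phi> \<rho>) * fps_X) * tshk
      = (2 + fps_const (\<phi> \<rho>) * fps_X) * skh + fps_X * (skh - tsk)"
    using syA[OF inR(1) inR(3)] by (simp only: al) (simp add: tshk_def shk_def skh_def tsk_def)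
  have S2raw: "(2 + fps_const (\<phi> \<rho>) * fps_X) * tsk
      = (2 + fps_const (\<phi> \<rho>) * fps_X) * shk + fps_X * (shk - tshk)"
    using syA[OF inR(2) inR(4)] by (simp only: al) (simp add: tshk_def shk_def skh_def tsk_def)
  have S1: "lin (iota \<phi>) P 8 kS1 = 0"
    using arg_cong[OF S1raw, of "\<lambda>z. inV z * inU shh"]
    apply (subst (asm) eq_iff_diff_eq_0)
    apply (simp add: inV_hom nsimps)
    apply (erule lin_eq0)
    apply (drule lt8)
    apply (elim disjE)
    apply (simp_all add: cdefs kS1_def del: cdel mult_cancel_left mult_cancel_right)
    apply ((rule disjI2 | algebra)+)?
    done
  have S2: "lin (iota \<phi>) P 8 kS2 = 0"
    using arg_cong[OF S2raw, of "\<lambda>z. inV z * inU shh"]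
    apply (subst (asm) eq_iff_diff_eq_0)
    apply (simp add: inV_hom nsimps)
    apply (erule lin_eq0)
    apply (drule lt8)
    apply (elim disjE)
    apply (simp_all add: cdefs kS2_def del: cdel mult_cancel_left mult_cancel_right)
    apply ((rule disjI2 | algebra)+)?
    done
  define K2 where "K2 = 2 + fps_const (fps_const (\<rho> + 1)) * Y"
  have c1: "iota \<phi> Y * lin (iota \<phi>) P 8 kS1 - iota \<phi> (2 + r*Y) * lin (iota \<phi>) P 8 kS2
      = lin (iota \<phi>) P 8 (\<lambda>i. Y * kS1 i - (2 + r*Y) * kS2 i)"
    by (simp only: lin_smult[OF ch] lin_diff[OF ch])
  have c2: "lin (iota \<phi>) P 8 (\<lambda>i. Y * kS1 i - (2 + r*Y) * kS2 i) = lin (iota \<phi>) P 8 (\<lambda>i. K2 * sg i)"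
    apply (rule lin_cong)
    apply (drule lt8)
    apply (elim disjE)
    apply (simp_all add: cdefs kS1_def kS2_def sg_def K2_def del: cdel mult_cancel_left mult_cancel_right)
    apply ((rule disjI2 | algebra)+)?
    done
  have sgK: "iota \<phi> K2 * lin (iota \<phi>) P 8 sg = 0"
    using c1 c2 S1 S2 by (simp add: lin_smult[OF ch])
  have iK2: "iota \<phi> K2 = fps_const (2 + fps_const (\<phi> (\<rho> + 1)) * fps_X)"
  proof -
    have "iota \<phi> K2 = 2 + sc \<phi> (\<rho> + 1) * yV"
      by (simp add: K2_def Y_def iota_atoms[OF cm] iota_fold(1-7)[OF cm])
    then show ?thesis by (simp add: sc_def yV_def fps_numeral_fps_const)
  qed
  have t2: "\<phi> (1/2) * 2 = 1"
  proof -
    have "\<phi> (1/2) * 2 = \<phi> (1/2) * \<phi> 2" using chom_numeral[OF calg_chom[OF cm], of "num.Bit0 num.One"] by simp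
    also have "\<dots> = \<phi> (1/2 * 2)" by (rule chomD(3)[OF calg_chom[OF cm], symmetric])
    also have "\<dots> = 1" using chomD(1)[OF calg_chom[OF cm]] by simp
    finally show ?thesis .
  qed
  have sg0: "lin (iota \<phi>) P 8 sg = 0"
    using sgK unfolding iK2 by (rule cancel2[OF t2])
  have d1: "iota \<phi> A * lin (iota \<phi>) P 8 kR1 + iota \<phi> c * lin (iota \<phi>) P 8 kR3
      = lin (iota \<phi>) P 8 (\<lambda>i. A * kR1 i + c * kR3 i)"
    by (simp only: lin_smult[OF ch] lin_add[OF ch])
  have d2: "lin (iota \<phi>) P 8 (\<lambda>i. A * kR1 i + c * kR3 i) = lin (iota \<phi>) P 8 (\<lambda>i. (A - c) * e i)"
    apply (rule lin_cong)
    apply (drule lt8)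
    apply (elim disjE)
    apply (simp_all add: cdefs kR1_def kR3_def e_def del: cdel mult_cancel_left mult_cancel_right)
    apply ((rule disjI2 | algebra)+)?
    done
  have eA: "iota \<phi> (A - c) * lin (iota \<phi>) P 8 e = 0"
    using d1 d2 R1 R3 by (simp add: lin_smult[OF ch])
  have iA: "iota \<phi> (A - c) = yV - xU - xU * yV"
    by (simp add: A_def c_def X_def Y_def iota_atoms[OF cm] iota_fold(1-7)[OF cm])
  have e0: "lin (iota \<phi>) P 8 e = 0"
    using eA unfolding iA by (rule cancel1)
  have G0: "lin (iota \<phi>) P 8 (\<lambda>i. (2 + r*Y) * e i - (c * A) * sg i) = 0"
  proof -
    have "lin (iota \<phi>) P 8 (\<lambda>i. (2 + r*Y) * e i - (c * A) * sg i)
       = iota \<phi> (2 + r*Y) * lin (iota \<phi>) P 8 e - iota \<phi> (c * A) * lin (iota \<phi>) P 8 sg"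
      by (simp only: lin_smult[OF ch] lin_diff[OF ch])
    then show ?thesis using e0 sg0 by simp
  qed
  show ?thesis
    unfolding skh_def[symmetric] shh_def[symmetric] tsk_def[symmetric]
    apply (subst eq_iff_diff_eq_0)
    apply (simp add: nsimps)
    apply (rule lin_eq0[OF G0])
    apply (drule lt8)
    apply (elim disjE)
    apply (simp_all add: cdefs e_def sg_def del: cdel mult_cancel_left mult_cancel_right)
    apply ((rule disjI2 | algebra)+)?
    done
qed



end
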